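(* Let $m\in\mathbf{N}$ and let $n\le5$ be a positive integer. If $\mathcal{P}$ is a closed set family of shape $(m^n)$, then $\mathcal{P}$ has type $(m^n)\star\nu$ for some partition $\nu$ of $n-1$ with at most $m$ parts.
   Context: Majorization: for $m$-subsets $X=\{x_1<\dots<x_m\}$, $Y=\{y_1<\dots<y_m\}$ of $\mathbf{N}$, $X\preceq Y$ if $x_i\le y_i$ for all $i$. A set family of shape $(m^n)$ is a collection of $n$ distinct $m$-subsets of $\mathbf{N}$; it is closed if $Y$ in it and $X\preceq Y$ imply $X$ in it; it has type $\lambda$ (largest part $a$, conjugate $\lambda'$) if for each $i\in\{1,\dots,a\}$ exactly $\lambda'_i$ of its sets contain $i$ (closed set families always have a type). For a partition $\nu$ of $n-1$ with $k\le m$ parts, $(m^n)\star\nu$ is the partition obtained from the Young diagram of $(m^n)$ by, for each $1\le i\le k$, deleting $\nu_i$ boxes (from the bottom) of column $m+1-i$ and adding $\nu_i$ boxes to row $i$. *)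

theory Defs
  imports Main
begin

definition m_subset :: "nat \<Rightarrow> nat set \<Rightarrow> bool" where
  "m_subset m X \<longleftrightarrow> finite X \<and> card X = m \<and> 0 \<notin> X"

definition majorized :: "nat set \<Rightarrow> nat set \<Rightarrow> bool" where
  "majorized X Y \<longleftrightarrow> finite X \<and> finite Y \<and> card X = card Y \<and>
     (\<forall>i < card X. sorted_list_of_set X ! i \<le> sorted_list_of_set Y ! i)"

definition set_family :: "nat \<Rightarrow> nat \<Rightarrow> nat set set \<Rightarrow> bool" where
  "set_family m n P \<longleftrightarrow> finite P \<and> card P = n \<and> (\<forall>X\<in>P. m_subset m X)"

definition closed_family :: "nat \<Rightarrow> nat set set \<Rightarrow> bool" where
  "closed_family m P \<longleftrightarrow> (\<forall>Y\<in>P. \<forall>X. m_subset m X \<and> majorized X Y \<longrightarrow> X \<in> P)"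

definition nat_partition :: "nat list \<Rightarrow> nat \<Rightarrow> bool" where
  "nat_partition p N \<longleftrightarrow> sorted_wrt (\<ge>) p \<and> 0 \<notin> set p \<and> sum_list p = N"

text \<open>The i-th part (1-indexed), zero beyond the number of parts.\<close>
definition part :: "nat list \<Rightarrow> nat \<Rightarrow> nat" where
  "part p i = (if 1 \<le> i \<and> i \<le> length p then p ! (i - 1) else 0)"

definition conj_part :: "nat list \<Rightarrow> nat \<Rightarrow> nat" where
  "conj_part p j = length (filter (\<lambda>x. j \<le> x) p)"

definition largest_part :: "nat list \<Rightarrow> nat" where
  "largest_part p = (if p = [] then 0 else Max (set p))"

definition has_type :: "nat set set \<Rightarrow> nat list \<Rightarrow> bool" where
  "has_type P lam \<longleftrightarrow>
     (\<forall>i\<in>{1..largest_part lam}. card {S\<in>P. i \<in> S} = conj_part lam i)"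

text \<open>(m^n) \<star> nu: column j (1..m) of (m^n) has length n; column m+1-i loses
nu_i boxes (for i \<le> k; nu_i = 0 for i > k), and row i gains nu_i boxes.
Row r of the result has length #{j \<in> 1..m. r \<le> n - nu_(m+1-j)} + nu_r,
for r = 1..n (rows beyond n are empty since nu has fewer than n parts).\<close>
definition star :: "nat \<Rightarrow> nat \<Rightarrow> nat list \<Rightarrow> nat list" where
  "star m n nu = filter (\<lambda>x. 0 < x)
     (map (\<lambda>r. card {j\<in>{1..m}. r \<le> n - part nu (m + 1 - j)} + part nu r) [1..<n+1])"

end

theory Submission imports Defs begin

definition cnt :: "nat set \<Rightarrow> nat \<Rightarrow> nat" where
  "cnt X t = card {x\<in>X. x \<le> t}"

lemma nth_le_iff:
  assumes "finite X" "i < card X"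
  shows "(sorted_list_of_set X ! i \<le> t) \<longleftrightarrow> i < cnt X t"
proof -
  define s where "s = sorted_list_of_set X"
  have len: "length s = card X" and dist: "distinct s" and srt: "sorted s" and st: "set s = X"
    using assms(1) by (auto simp: s_def)
  have fin: "finite {x\<in>X. x \<le> t}" using assms(1) by auto
  show ?thesis
  proof
    assume h: "sorted_list_of_set X ! i \<le> t"
    have "(\<lambda>j. s!j) ` {..i} \<subseteq> {x\<in>X. x \<le> t}"
    proof
      fix x assume "x \<in> (\<lambda>j. s!j) ` {..i}"
      then obtain j where j: "j \<le> i" "x = s!j" by auto
      have "s!j \<le> s!i" using sorted_nth_mono[OF srt j(1)] assms(2) len by simp
      moreover have "s!j \<in> X" using st j assms(2) len by (metis le_less_trans nth_mem)
      ultimately show "x \<in> {x\<in>X. x \<le> t}" using j h s_def by auto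
    qed
    moreover have "inj_on (\<lambda>j. s!j) {..i}"
      using dist assms(2) len by (auto simp: inj_on_def nth_eq_iff_index_eq)
    ultimately have "card {..i} \<le> cnt X t" unfolding cnt_def
      by (metis card_image card_mono fin)
    then show "i < cnt X t" by simp
  next
    assume h: "i < cnt X t"
    show "sorted_list_of_set X ! i \<le> t"
    proof (rule ccontr)
      assume "\<not> ?thesis"
      hence gt: "t < s!i" by (simp add: s_def)
      have "{x\<in>X. x \<le> t} \<subseteq> (\<lambda>j. s!j) ` {..<i}"
      proof
        fix x assume x: "x \<in> {x\<in>X. x \<le> t}"
        then obtain j where j: "j < length s" "x = s!j" using st by (auto simp: in_set_conv_nth)
        have "j < i"
        proof (rule ccontr)
          assume "\<not> j < i" hence "i \<le> j" by simp
          hence "s!i \<le> s!j" using sorted_nth_mono[OF srt] j by simp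
          thus False using gt x j by simp
        qed
        thus "x \<in> (\<lambda>j. s!j) ` {..<i}" using j by auto
      qed
      hence "cnt X t \<le> card ((\<lambda>j. s!j) ` {..<i})" unfolding cnt_def by (simp add: card_mono)
      also have "\<dots> \<le> i" using card_image_le[of "{..<i}"] by simp
      finally show False using h by simp
    qed
  qed
qed

lemma maj_iff:
  assumes "finite X" "finite Y" "card X = card Y"
  shows "majorized X Y \<longleftrightarrow> (\<forall>t. cnt Y t \<le> cnt X t)"
proof
  assume h: "majorized X Y"
  show "\<forall>t. cnt Y t \<le> cnt X t"
  proof
    fix t
    show "cnt Y t \<le> cnt X t"
    proof (cases "cnt Y t = 0")
      case True thus ?thesis by simp
    next
      case False
      have "cnt Y t \<le> card Y" unfolding cnt_def using assms(2) by (intro card_mono) auto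
      hence k: "cnt Y t - 1 < card Y" using False by simp
      hence "sorted_list_of_set Y ! (cnt Y t - 1) \<le> t" using nth_le_iff[OF assms(2) k] False by simp
      moreover have "sorted_list_of_set X ! (cnt Y t - 1) \<le> sorted_list_of_set Y ! (cnt Y t - 1)"
        using h k assms(3) unfolding majorized_def by simp
      ultimately have "sorted_list_of_set X ! (cnt Y t - 1) \<le> t" by simp
      hence "cnt Y t - 1 < cnt X t" using nth_le_iff[OF assms(1)] k assms(3) by simp
      thus ?thesis by simp
    qed
  qed
next
  assume h: "\<forall>t. cnt Y t \<le> cnt X t"
  show "majorized X Y" unfolding majorized_def
  proof (intro conjI allI impI)
    fix i assume i: "i < card X"
    have "i < cnt Y (sorted_list_of_set Y ! i)" using nth_le_iff[OF assms(2), of i "sorted_list_of_set Y ! i"] i assms(3) by simp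
    hence "i < cnt X (sorted_list_of_set Y ! i)" using h by (meson less_le_trans)
    thus "sorted_list_of_set X ! i \<le> sorted_list_of_set Y ! i" using nth_le_iff[OF assms(1) i] by simp
  qed (use assms in auto)
qed

definition Yab :: "nat \<Rightarrow> nat \<Rightarrow> nat \<Rightarrow> nat set" where
  "Yab m a b = ({1..m} - {a}) \<union> {b}"

lemma cnt_msub: "m_subset m X \<Longrightarrow> cnt X t \<le> min t m"
proof -
  assume h: "m_subset m X"
  have fX: "finite X" and cX: "card X = m" and zX: "0 \<notin> X" using h unfolding m_subset_def by auto
  have sub: "{x\<in>X. x \<le> t} \<subseteq> {1..t}"
  proof
    fix x assume "x \<in> {x\<in>X. x \<le> t}"
    hence x: "x \<in> X" "x \<le> t" by auto
    have "x \<noteq> 0" using x(1) zX by metis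
    thus "x \<in> {1..t}" using x(2) by simp
  qed
  have "cnt X t \<le> card {1..t}" unfolding cnt_def by (rule card_mono[OF finite_atLeastAtMost sub])
  hence "cnt X t \<le> t" by simp
  moreover have "cnt X t \<le> card X" unfolding cnt_def by (rule card_mono[OF fX]) auto
  ultimately show ?thesis using cX by simp
qed

lemma cnt_mono: "finite X \<Longrightarrow> t \<le> t' \<Longrightarrow> cnt X t \<le> cnt X t'"
  unfolding cnt_def by (intro card_mono) auto

lemma cnt_I: "cnt {1..m} t = min t m"
proof -
  have "{x\<in>{1..m}. x \<le> t} = {1..min t m}" by auto
  thus ?thesis unfolding cnt_def by simp
qed

lemma msub_I: "m_subset m {1..m}" unfolding m_subset_def by simp

lemma Y_msub: "1 \<le> a \<Longrightarrow> a \<le> m \<Longrightarrow> m < b \<Longrightarrow> m_subset m (Yab m a b)"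
  unfolding m_subset_def Yab_def by auto

lemma cnt_Y:
  assumes "1 \<le> a" "a \<le> m" "m < b"
  shows "cnt (Yab m a b) t = min t m - (if a \<le> t \<and> t < b then 1 else 0)"
proof (cases "t < a")
  case True
  hence "{x\<in>Yab m a b. x \<le> t} = {1..min t m}" using assms unfolding Yab_def by auto
  thus ?thesis using True unfolding cnt_def by simp
next
  case False
  show ?thesis
  proof (cases "t < b")
    case True
    hence "{x\<in>Yab m a b. x \<le> t} = {1..min t m} - {a}" using assms False unfolding Yab_def by auto
    thus ?thesis using True False assms unfolding cnt_def by simp
  next
    case F2: False
    hence "{x\<in>Yab m a b. x \<le> t} = Yab m a b" using assms unfolding Yab_def by auto
    moreover have "card (Yab m a b) = m" using Y_msub[OF assms] unfolding m_subset_def by simp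
    ultimately show ?thesis using F2 assms unfolding cnt_def by simp
  qed
qed

lemma Y_inj:
  assumes "1 \<le> a" "a \<le> m" "m < b" "1 \<le> a'" "a' \<le> m" "m < b'" "Yab m a b = Yab m a' b'"
  shows "a = a' \<and> b = b'"
proof -
  have "b \<in> Yab m a b" unfolding Yab_def by simp
  hence "b \<in> Yab m a' b'" using assms(7) by simp
  hence "b = b'" using assms(3,6) unfolding Yab_def by auto
  moreover have "a \<notin> Yab m a b" using assms(2,3) unfolding Yab_def by simp
  hence na: "a \<notin> Yab m a' b'" using assms(7) by simp
  have "a \<in> {1..m}" "a \<noteq> b'" using assms by auto
  hence "a = a'" using na unfolding Yab_def by blast
  ultimately show ?thesis by simp
qed

lemma down_interval:
  assumes "finite A" "\<forall>k\<in>A. lo < k" "\<forall>k\<in>A. \<forall>k'. lo < k' \<and> k' \<le> k \<longrightarrow> k' \<in> A"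
  shows "A = {lo<..lo + card A}"
proof (cases "A = {}")
  case True thus ?thesis by simp
next
  case False
  define M where "M = Max A"
  have MA: "M \<in> A" using False assms(1) M_def by simp
  have "A = {lo<..M}"
  proof
    show "A \<subseteq> {lo<..M}" using assms(1,2) M_def by auto
    show "{lo<..M} \<subseteq> A" using assms(3) MA by auto
  qed
  moreover have "lo < M" using assms(2) MA by auto
  ultimately show ?thesis by simp
qed


locale fam =
  fixes m n :: nat and P :: "nat set set"
  assumes npos: "0 < n" and n5: "n \<le> 5" and sf: "set_family m n P" and cl: "closed_family m P"
begin

lemma finP: "finite P" using sf by (simp add: set_family_def)
lemma cardP: "card P = n" using sf by (simp add: set_family_def)
lemma msub: "X \<in> P \<Longrightarrow> m_subset m X" using sf by (simp add: set_family_def)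

lemma below:
  assumes "Y \<in> P" "m_subset m X" "\<And>t. cnt Y t \<le> cnt X t"
  shows "X \<in> P"
proof -
  have "majorized X Y"
    using maj_iff[of X Y] assms msub[OF assms(1)] unfolding m_subset_def by auto
  thus ?thesis using cl assms unfolding closed_family_def by blast
qed

lemma I_in: "{1..m} \<in> P"
proof -
  have "P \<noteq> {}" using cardP npos by auto
  then obtain Y where Y: "Y \<in> P" by auto
  show ?thesis
    by (rule below[OF Y msub_I]) (use cnt_msub[OF msub[OF Y]] cnt_I in simp)
qed

lemma shape:
  assumes X: "X \<in> P" "X \<noteq> {1..m}"
  shows "\<exists>a b. 1 \<le> a \<and> a \<le> m \<and> m < b \<and> X = Yab m a b"
proof -
  have ms: "finite X" "card X = m" "0 \<notin> X" using msub[OF X(1)] unfolding m_subset_def by auto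
  define D where "D = X - {1..m}"
  have DX: "D \<subseteq> X" unfolding D_def by auto
  have finD: "finite D" using DX ms(1) finite_subset by blast
  have Dgt: "\<And>d. d \<in> D \<Longrightarrow> m < d"
  proof -
    fix d assume "d \<in> D"
    hence dd: "d \<in> X" "d \<notin> {1..m}" unfolding D_def by auto
    have "d \<noteq> 0" using dd(1) ms(3) by metis
    with dd show "m < d" by (cases d) auto
  qed
  have XmD: "{x\<in>X. x \<le> m} = X - D"
  proof
    show "{x\<in>X. x \<le> m} \<subseteq> X - D"
    proof
      fix x assume "x \<in> {x\<in>X. x \<le> m}"
      hence x: "x \<in> X" "x \<le> m" by auto
      have "x \<noteq> 0" using x(1) ms(3) by metis
      thus "x \<in> X - D" using x unfolding D_def by simp
    qed
    show "X - D \<subseteq> {x\<in>X. x \<le> m}" unfolding D_def by auto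
  qed
  have cXD: "card (X - D) = m - card D" using card_Diff_subset[OF finD DX] ms(2) by simp
  have Dne: "D \<noteq> {}"
  proof
    assume "D = {}"
    hence "X \<subseteq> {1..m}" unfolding D_def by auto
    hence "X = {1..m}" using card_subset_eq[of "{1..m}" X] ms(2) by simp
    thus False using X(2) by simp
  qed
  have Dle: "card D \<le> m" using card_mono[OF ms(1) DX] ms(2) by simp
  have cardD: "card D = 1"
  proof (rule ccontr)
    assume "card D \<noteq> 1"
    moreover have "card D \<noteq> 0" using Dne finD by simp
    ultimately have c2: "2 \<le> card D" by simp
    hence m2: "2 \<le> m" using Dle by simp
    have c1: "cnt X m \<le> m - 2" unfolding cnt_def using XmD cXD c2 by simp
    obtain d1 where d1: "d1 \<in> D" using Dne by auto
    have "card (D - {d1}) \<ge> 1" using c2 d1 finD by simp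
    hence "D - {d1} \<noteq> {}" by (metis card.empty not_one_le_zero)
    then obtain d2 where d2: "d2 \<in> D" "d2 \<noteq> d1" by blast
    obtain d where d: "d \<in> D" "m + 2 \<le> d"
    proof (cases "d1 = m + 1")
      case True
      hence "m + 2 \<le> d2" using d2 Dgt[OF d2(1)] by simp
      thus ?thesis using that d2 by blast
    next
      case False
      hence "m + 2 \<le> d1" using Dgt[OF d1] by simp
      thus ?thesis using that d1 by blast
    qed
    have "{x\<in>X. x \<le> m + 1} \<subseteq> X - {d}" using d by auto
    hence "cnt X (m+1) \<le> card (X - {d})" unfolding cnt_def by (simp add: card_mono ms(1))
    also have "\<dots> = m - 1" using d DX ms by (subst card_Diff_singleton) auto
    finally have c3: "cnt X (m+1) \<le> m - 1" .
    have key: "\<And>t. m - 1 \<le> t \<Longrightarrow> t \<le> m + 1 \<Longrightarrow> cnt X t + 1 \<le> min t m"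
    proof -
      fix t assume t: "m - 1 \<le> t" "t \<le> m + 1"
      show "cnt X t + 1 \<le> min t m"
      proof (cases "t \<le> m")
        case True
        hence "cnt X t \<le> cnt X m" using cnt_mono ms(1) by blast
        thus ?thesis using c1 t True m2 by simp
      next
        case False
        hence "t = m + 1" using t by simp
        thus ?thesis using c3 m2 by simp
      qed
    qed
    have Yin: "\<And>a b. m - 1 \<le> a \<Longrightarrow> a \<le> m \<Longrightarrow> m < b \<Longrightarrow> b \<le> m + 2 \<Longrightarrow> Yab m a b \<in> P"
    proof -
      fix a b assume ab: "m - 1 \<le> a" "a \<le> m" "m < b" "b \<le> m + 2"
      have a1: "1 \<le> a" using ab m2 by simp
      show "Yab m a b \<in> P"
      proof (rule below[OF X(1) Y_msub[OF a1 ab(2,3)]])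
        fix t
        show "cnt X t \<le> cnt (Yab m a b) t"
        proof (cases "a \<le> t \<and> t < b")
          case True
          hence "cnt X t + 1 \<le> min t m" using key ab by simp
          thus ?thesis using cnt_Y[OF a1 ab(2,3), of t] True by (simp add: min_def split: if_splits)
        next
          case False
          thus ?thesis using cnt_Y[OF a1 ab(2,3), of t] cnt_msub[OF msub[OF X(1)], of t] by auto
        qed
      qed
    qed
    define A1 where "A1 = Yab m m (m+1)"
    define A2 where "A2 = Yab m (m-1) (m+1)"
    define A3 where "A3 = Yab m m (m+2)"
    define A4 where "A4 = Yab m (m-1) (m+2)"
    have inP: "A1 \<in> P" "A2 \<in> P" "A3 \<in> P" "A4 \<in> P"
      unfolding A1_def A2_def A3_def A4_def by (auto intro: Yin)
    have neI: "\<And>a b. m < b \<Longrightarrow> Yab m a b \<noteq> {1..m}"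
    proof
      fix a b assume "m < b" "Yab m a b = {1..m}"
      moreover have "b \<in> Yab m a b" unfolding Yab_def by simp
      ultimately show False by auto
    qed
    have neX: "\<And>a b. m < b \<Longrightarrow> Yab m a b \<noteq> X"
    proof
      fix a b assume b: "m < b" and e: "Yab m a b = X"
      have "D = {b}" using e b unfolding D_def Yab_def by auto
      thus False using c2 by simp
    qed
    have d12: "A1 \<noteq> A2" "A1 \<noteq> A3" "A1 \<noteq> A4" "A2 \<noteq> A3" "A2 \<noteq> A4" "A3 \<noteq> A4"
    proof -
      have ne2: "\<And>a b a' b'. Yab m a b = Yab m a' b' \<Longrightarrow> m - 1 \<le> a \<Longrightarrow> a \<le> m \<Longrightarrow> m < b \<Longrightarrow> m - 1 \<le> a' \<Longrightarrow> a' \<le> m \<Longrightarrow> m < b' \<Longrightarrow> a = a' \<and> b = b'"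
      proof -
        fix a b a' b' assume h: "Yab m a b = Yab m a' b'" "m - 1 \<le> a" "a \<le> m" "m < b" "m - 1 \<le> a'" "a' \<le> m" "m < b'"
        have "1 \<le> a" "1 \<le> a'" using h(2,5) m2 by linarith+
        thus "a = a' \<and> b = b'" using Y_inj[of a m b a' b'] h by blast
      qed
      show "A1 \<noteq> A2" "A1 \<noteq> A3" "A1 \<noteq> A4" "A2 \<noteq> A3" "A2 \<noteq> A4" "A3 \<noteq> A4"
        unfolding A1_def A2_def A3_def A4_def using m2 by (auto dest!: ne2)
    qed
    have dI: "A1 \<noteq> {1..m}" "A2 \<noteq> {1..m}" "A3 \<noteq> {1..m}" "A4 \<noteq> {1..m}"
      unfolding A1_def A2_def A3_def A4_def by (rule neI; simp)+
    have dX: "A1 \<noteq> X" "A2 \<noteq> X" "A3 \<noteq> X" "A4 \<noteq> X"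
      unfolding A1_def A2_def A3_def A4_def by (simp_all add: neX)
    have c6: "card {X, {1..m}, A1, A2, A3, A4} = 6"
      using d12 dI dX X(2) by simp
    have "{X, {1..m}, A1, A2, A3, A4} \<subseteq> P" using inP X(1) I_in by auto
    hence "card {X, {1..m}, A1, A2, A3, A4} \<le> card P" by (rule card_mono[OF finP])
    hence "6 \<le> card P" using c6 by simp
    thus False using cardP n5 by simp
  qed
  then obtain b where Db: "D = {b}" by (meson card_1_singletonE)
  have "card ({1..m} - X) = 1"
  proof -
    have "X \<inter> {1..m} = X - D" unfolding D_def by auto
    hence "card (X \<inter> {1..m}) = m - 1" using cXD cardD by simp
    moreover have "{1..m} - X = {1..m} - (X \<inter> {1..m})" by auto
    ultimately show ?thesis using card_Diff_subset[of "X \<inter> {1..m}" "{1..m}"] Dle cardD by simp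
  qed
  then obtain a where Ia: "{1..m} - X = {a}" by (meson card_1_singletonE)
  have "X = Yab m a b" unfolding Yab_def using Ia Db unfolding D_def by blast
  moreover have "1 \<le> a" "a \<le> m" using Ia by auto
  moreover have "m < b" using Dgt Db by simp
  ultimately show ?thesis by blast
qed


definition S :: "(nat \<times> nat) set" where
  "S = {(a,b). 1 \<le> a \<and> a \<le> m \<and> m < b \<and> Yab m a b \<in> P}"

abbreviation Yf :: "nat \<times> nat \<Rightarrow> nat set" where "Yf \<equiv> (\<lambda>(a,b). Yab m a b)"

lemma S_bounds: "(a,b) \<in> S \<Longrightarrow> 1 \<le> a \<and> a \<le> m \<and> m < b" unfolding S_def by auto

lemma inj_S: "inj_on Yf S"
  unfolding inj_on_def S_def using Y_inj by auto

lemma P_eq: "P = insert {1..m} (Yf ` S)"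
proof
  show "P \<subseteq> insert {1..m} (Yf ` S)"
  proof
    fix X assume X: "X \<in> P"
    show "X \<in> insert {1..m} (Yf ` S)"
    proof (cases "X = {1..m}")
      case False
      then obtain a b where "1 \<le> a" "a \<le> m" "m < b" "X = Yab m a b" using shape X by blast
      thus ?thesis using X unfolding S_def by (auto intro!: image_eqI[of _ _ "(a,b)"])
    qed simp
  qed
  show "insert {1..m} (Yf ` S) \<subseteq> P" using I_in unfolding S_def by auto
qed

lemma I_notin: "{1..m} \<notin> Yf ` S"
proof
  assume "{1..m} \<in> Yf ` S"
  then obtain a b where ab: "(a,b) \<in> S" "{1..m} = Yab m a b" by auto
  have "b \<in> Yab m a b" unfolding Yab_def by simp
  hence "b \<in> {1..m}" using ab(2) by simp
  thus False using S_bounds[OF ab(1)] by auto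
qed

lemma finS: "finite S"
proof -
  have "Yf ` S \<subseteq> P" using P_eq by auto
  hence "finite (Yf ` S)" using finP finite_subset by blast
  thus ?thesis using finite_imageD inj_S by blast
qed

lemma cardS: "card S = n - 1"
proof -
  have "n = card (insert {1..m} (Yf ` S))" using P_eq cardP by simp
  also have "\<dots> = Suc (card S)" using I_notin finS inj_S by (simp add: card_image)
  finally show ?thesis by simp
qed

lemma S_down:
  assumes "(a,b) \<in> S" "a \<le> a'" "a' \<le> m" "m < b'" "b' \<le> b"
  shows "(a',b') \<in> S"
proof -
  have ab: "1 \<le> a" "a \<le> m" "m < b" "Yab m a b \<in> P" using assms(1) unfolding S_def by auto
  have a1: "1 \<le> a'" using ab assms by simp
  have "Yab m a' b' \<in> P"
  proof (rule below[OF ab(4) Y_msub[OF a1 assms(3,4)]])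
    fix t
    show "cnt (Yab m a b) t \<le> cnt (Yab m a' b') t"
      using cnt_Y[OF ab(1-3), of t] cnt_Y[OF a1 assms(3,4), of t] assms by auto
  qed
  thus ?thesis unfolding S_def using a1 assms by auto
qed

definition w :: "nat \<Rightarrow> nat" where "w a = card {b. (a,b) \<in> S}"

lemma fib_fin: "finite {b. (a,b) \<in> S}"
proof -
  have "{b. (a,b) \<in> S} \<subseteq> snd ` S"
  proof
    fix b assume "b \<in> {b. (a,b) \<in> S}"
    thus "b \<in> snd ` S" using image_eqI[of b snd "(a,b)"] by simp
  qed
  thus ?thesis using finS finite_subset by blast
qed

lemma row: "{b. (a,b) \<in> S} = {m<..m + w a}"
  unfolding w_def
proof (rule down_interval[OF fib_fin])
  show "\<forall>k\<in>{b. (a, b) \<in> S}. m < k" using S_bounds by auto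
  show "\<forall>k\<in>{b. (a, b) \<in> S}. \<forall>k'. m < k' \<and> k' \<le> k \<longrightarrow> k' \<in> {b. (a, b) \<in> S}"
  proof (intro ballI allI impI)
    fix k k' assume k: "k \<in> {b. (a, b) \<in> S}" and k': "m < k' \<and> k' \<le> k"
    have "(a,k) \<in> S" using k by simp
    moreover have "a \<le> m" using S_bounds[OF \<open>(a,k) \<in> S\<close>] by simp
    ultimately have "(a,k') \<in> S" using S_down[of a k a k'] k' by simp
    thus "k' \<in> {b. (a, b) \<in> S}" by simp
  qed
qed

lemma memS: "(a,b) \<in> S \<longleftrightarrow> m < b \<and> b \<le> m + w a"
proof -
  have "(a,b) \<in> S \<longleftrightarrow> b \<in> {b. (a,b) \<in> S}" by simp
  also have "\<dots> \<longleftrightarrow> b \<in> {m<..m + w a}" using row by simp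
  finally show ?thesis by simp
qed

lemma w_mono: "a \<le> a' \<Longrightarrow> a' \<le> m \<Longrightarrow> w a \<le> w a'"
proof -
  assume h: "a \<le> a'" "a' \<le> m"
  have "{b. (a,b) \<in> S} \<subseteq> {b. (a',b) \<in> S}"
  proof
    fix b assume "b \<in> {b. (a,b) \<in> S}"
    hence ab: "(a,b) \<in> S" by simp
    hence "m < b" using S_bounds by simp
    thus "b \<in> {b. (a',b) \<in> S}" using S_down[OF ab h(1) h(2) \<open>m < b\<close> order_refl] by simp
  qed
  thus ?thesis unfolding w_def by (simp add: card_mono fib_fin)
qed

lemma w_out: "a = 0 \<or> m < a \<Longrightarrow> w a = 0"
proof -
  assume "a = 0 \<or> m < a"
  hence "{b. (a,b) \<in> S} = {}" by (auto dest: S_bounds)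
  thus ?thesis unfolding w_def by simp
qed

lemma sumw: "(\<Sum>a\<in>{1..m}. w a) = n - 1"
proof -
  have "S = Sigma {1..m} (\<lambda>a. {b. (a,b) \<in> S})" using S_bounds by auto
  moreover have "card (Sigma {1..m} (\<lambda>a. {b. (a,b) \<in> S})) = (\<Sum>a\<in>{1..m}. card {b. (a,b) \<in> S})"
    by (rule card_SigmaI) (auto simp: fib_fin)
  ultimately have "card S = (\<Sum>a\<in>{1..m}. card {b. (a,b) \<in> S})" by simp
  thus ?thesis using cardS unfolding w_def by simp
qed

definition v :: "nat \<Rightarrow> nat" where "v k = w (m + 1 - k)"

lemma v_w: "1 \<le> j \<Longrightarrow> j \<le> m \<Longrightarrow> v (m + 1 - j) = w j"
  unfolding v_def by simp

lemma v_zero: "m < k \<Longrightarrow> v k = 0"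
  unfolding v_def using w_out by simp

lemma v_anti: "1 \<le> k \<Longrightarrow> k \<le> k' \<Longrightarrow> v k' \<le> v k"
proof (cases "m < k'")
  case True thus ?thesis using v_zero by simp
next
  case False
  assume "1 \<le> k" "k \<le> k'"
  thus ?thesis unfolding v_def using False by (intro w_mono) auto
qed

lemma sumv: "(\<Sum>k\<in>{1..m}. v k) = n - 1"
proof -
  have "(\<Sum>k\<in>{1..m}. v k) = (\<Sum>a\<in>{1..m}. w a)"
    unfolding v_def
    by (rule sum.reindex_bij_witness[where i="\<lambda>a. m + 1 - a" and j="\<lambda>k. m + 1 - k"]) auto
  thus ?thesis using sumw by simp
qed

definition L :: nat where "L = card {k\<in>{1..m}. 0 < v k}"

lemma L_iff: "1 \<le> k \<Longrightarrow> (0 < v k \<longleftrightarrow> k \<le> L)"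
proof -
  assume k: "1 \<le> k"
  have "{k\<in>{1..m}. 0 < v k} = {0<..0 + L}" unfolding L_def
  proof (rule down_interval)
    show "\<forall>k'\<in>{k \<in> {1..m}. 0 < v k}. \<forall>k'a. 0 < k'a \<and> k'a \<le> k' \<longrightarrow> k'a \<in> {k \<in> {1..m}. 0 < v k}"
    proof (intro ballI allI impI)
      fix k' k'' assume h1: "k' \<in> {k \<in> {1..m}. 0 < v k}" and h2: "0 < k'' \<and> k'' \<le> k'"
      have "v k' \<le> v k''" using v_anti[of k'' k'] h2 by simp
      thus "k'' \<in> {k \<in> {1..m}. 0 < v k}" using h1 h2 by auto
    qed
  qed auto
  moreover have "0 < v k \<longleftrightarrow> k \<in> {k\<in>{1..m}. 0 < v k}"
  proof
    assume h: "0 < v k"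
    have "\<not> m < k" using v_zero[of k] h by auto
    thus "k \<in> {k\<in>{1..m}. 0 < v k}" using k h by simp
  qed simp
  ultimately show ?thesis using k by auto
qed

lemma L_le: "L \<le> m"
proof -
  have "{k\<in>{1..m}. 0 < v k} \<subseteq> {1..m}" by auto
  hence "L \<le> card {1..m}" unfolding L_def by (rule card_mono[rotated]) simp
  thus ?thesis by simp
qed

definition nuL :: "nat list" where "nuL = map v [1..<L+1]"

lemma part_nu: "1 \<le> k \<Longrightarrow> part nuL k = v k"
  unfolding part_def nuL_def using L_iff[of k] by (auto simp: nth_map nth_upt simp del: upt_Suc)

lemma sum_v_ge:
  assumes r: "1 \<le> r" "r \<le> m" and vr: "0 < v r"
  shows "v 1 + (r - 1) \<le> (\<Sum>j\<in>{1..r}. v j)" "r \<le> (\<Sum>j\<in>{1..r}. v j)"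
proof -
  have split: "{1..r} = insert 1 {2..r}" using r by auto
  have "(\<Sum>j\<in>{1..r}. 1) \<le> (\<Sum>j\<in>{1..r}. v j)"
  proof (rule sum_mono)
    fix j assume "j \<in> {1..r}"
    hence "v r \<le> v j" using v_anti by auto
    thus "1 \<le> v j" using vr by simp
  qed
  thus "r \<le> (\<Sum>j\<in>{1..r}. v j)" by simp
  have "(\<Sum>j\<in>{2..r}. 1) \<le> (\<Sum>j\<in>{2..r}. v j)"
  proof (rule sum_mono)
    fix j assume "j \<in> {2..r}"
    hence "v r \<le> v j" using v_anti by auto
    thus "1 \<le> v j" using vr by simp
  qed
  hence "r - 1 \<le> (\<Sum>j\<in>{2..r}. v j)" by simp
  thus "v 1 + (r - 1) \<le> (\<Sum>j\<in>{1..r}. v j)" using split by simp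
qed

lemma sum_v_le: "r \<le> m \<Longrightarrow> (\<Sum>j\<in>{1..r}. v j) \<le> n - 1"
proof -
  assume "r \<le> m"
  hence "(\<Sum>j\<in>{1..r}. v j) \<le> (\<Sum>j\<in>{1..m}. v j)" by (intro sum_mono2) auto
  thus ?thesis using sumv by simp
qed

lemma keyz:
  assumes "1 \<le> r" "r \<le> n" "1 \<le> k" "n < r + v k"
  shows "v r = 0"
proof (rule ccontr)
  assume "v r \<noteq> 0"
  hence vr: "0 < v r" by simp
  hence rm: "r \<le> m" by (rule contrapos_pp) (simp add: v_zero)
  have "v 1 + (r - 1) \<le> n - 1" using sum_v_ge(1)[OF assms(1) rm vr] sum_v_le[OF rm] by simp
  moreover have "v k \<le> v 1" using v_anti assms(3) by simp
  ultimately show False using assms npos by simp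
qed

lemma v_lt: "1 \<le> k \<Longrightarrow> 0 < v k \<Longrightarrow> k < n"
proof -
  assume k: "1 \<le> k" "0 < v k"
  have km: "k \<le> m"
  proof (rule ccontr)
    assume "\<not> k \<le> m" hence "v k = 0" by (simp add: v_zero)
    thus False using k by simp
  qed
  show "k < n" using sum_v_ge(2)[OF k(1) km k(2)] sum_v_le[OF km] npos by simp
qed


definition R :: "nat \<Rightarrow> nat" where
  "R r = card {j\<in>{1..m}. r \<le> n - w j} + v r"

lemma star_eq: "star m n nuL = filter (\<lambda>x. 0 < x) (map R [1..<n+1])"
  unfolding star_def
proof (rule arg_cong[where f="filter (\<lambda>x. 0 < x)"], rule map_cong[OF refl])
  fix r assume "r \<in> set [1..<n+1]"
  hence r: "1 \<le> r" by (simp only: set_upt) auto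
  have "{j\<in>{1..m}. r \<le> n - part nuL (m + 1 - j)} = {j\<in>{1..m}. r \<le> n - w j}"
    using part_nu v_w by auto
  thus "card {j\<in>{1..m}. r \<le> n - part nuL (m + 1 - j)} + part nuL r = R r"
    unfolding R_def using part_nu[OF r] by simp
qed

lemma conj_star: "1 \<le> i \<Longrightarrow> conj_part (star m n nuL) i = card {r\<in>{1..n}. i \<le> R r}"
proof -
  assume i: "1 \<le> i"
  have "conj_part (star m n nuL) i = length (filter (\<lambda>x. i \<le> x) (map R [1..<n+1]))"
    unfolding conj_part_def star_eq filter_filter
    by (rule arg_cong[where f=length], rule filter_cong) (use i in auto)
  also have "\<dots> = card ({x. i \<le> R x} \<inter> set [1..<n+1])"
    by (simp add: filter_map distinct_length_filter comp_def)
  also have "{x. i \<le> R x} \<inter> set [1..<n+1] = {r\<in>{1..n}. i \<le> R r}" by auto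
  finally show ?thesis .
qed

lemma count_low:
  assumes i: "1 \<le> i" "i \<le> m"
  shows "card {X\<in>P. i \<in> X} = n - w i"
proof -
  have eq: "{X\<in>P. i \<notin> X} = Yf ` ((\<lambda>b. (i,b)) ` {b. (i,b) \<in> S})"
  proof
    show "{X\<in>P. i \<notin> X} \<subseteq> Yf ` ((\<lambda>b. (i,b)) ` {b. (i,b) \<in> S})"
    proof
      fix X assume X: "X \<in> {X\<in>P. i \<notin> X}"
      hence "X \<noteq> {1..m}" using i by auto
      hence "X \<in> Yf ` S" using X P_eq by auto
      then obtain a b where ab: "(a,b) \<in> S" "X = Yab m a b" by auto
      have "a = i"
      proof (rule ccontr)
        assume "a \<noteq> i"
        hence "i \<in> Yab m a b" using i unfolding Yab_def by auto
        thus False using X ab by auto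
      qed
      thus "X \<in> Yf ` ((\<lambda>b. (i,b)) ` {b. (i,b) \<in> S})" using ab by auto
    qed
    show "Yf ` ((\<lambda>b. (i,b)) ` {b. (i,b) \<in> S}) \<subseteq> {X\<in>P. i \<notin> X}"
    proof
      fix X assume "X \<in> Yf ` ((\<lambda>b. (i,b)) ` {b. (i,b) \<in> S})"
      then obtain b where b: "(i,b) \<in> S" "X = Yab m i b" by auto
      have "m < b" using S_bounds[OF b(1)] by simp
      hence "i \<notin> X" using b(2) i unfolding Yab_def by auto
      moreover have "X \<in> P" using P_eq b by auto
      ultimately show "X \<in> {X\<in>P. i \<notin> X}" by simp
    qed
  qed
  have "card {X\<in>P. i \<notin> X} = card ((\<lambda>b. (i,b)) ` {b. (i,b) \<in> S})"
    unfolding eq by (rule card_image, rule inj_on_subset[OF inj_S]) auto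
  also have "\<dots> = w i" unfolding w_def by (rule card_image) (auto simp: inj_on_def)
  finally have c1: "card {X\<in>P. i \<notin> X} = w i" .
  have "{X\<in>P. i \<in> X} = P - {X\<in>P. i \<notin> X}" by auto
  hence "card {X\<in>P. i \<in> X} = card P - card {X\<in>P. i \<notin> X}"
    using card_Diff_subset[of "{X\<in>P. i \<notin> X}" P] finP by (simp add: finite_subset)
  thus ?thesis using c1 cardP by simp
qed

lemma count_high:
  assumes c: "1 \<le> c"
  shows "card {X\<in>P. m + c \<in> X} = card {a\<in>{1..m}. c \<le> w a}"
proof -
  have eq: "{X\<in>P. m + c \<in> X} = Yf ` ((\<lambda>a. (a, m+c)) ` {a\<in>{1..m}. c \<le> w a})"
  proof
    show "{X\<in>P. m + c \<in> X} \<subseteq> Yf ` ((\<lambda>a. (a, m+c)) ` {a\<in>{1..m}. c \<le> w a})"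
    proof
      fix X assume X: "X \<in> {X\<in>P. m + c \<in> X}"
      hence "X \<noteq> {1..m}" using c by auto
      hence "X \<in> Yf ` S" using X P_eq by auto
      then obtain a b where ab: "(a,b) \<in> S" "X = Yab m a b" by auto
      have "b = m + c" using X ab c unfolding Yab_def by auto
      hence "c \<le> w a" "1 \<le> a" "a \<le> m" using memS[of a b] ab S_bounds[OF ab(1)] by auto
      thus "X \<in> Yf ` ((\<lambda>a. (a, m+c)) ` {a\<in>{1..m}. c \<le> w a})"
        using ab \<open>b = m + c\<close> by auto
    qed
    show "Yf ` ((\<lambda>a. (a, m+c)) ` {a\<in>{1..m}. c \<le> w a}) \<subseteq> {X\<in>P. m + c \<in> X}"
    proof
      fix X assume "X \<in> Yf ` ((\<lambda>a. (a, m+c)) ` {a\<in>{1..m}. c \<le> w a})"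
      then obtain a where a: "a \<in> {1..m}" "c \<le> w a" "X = Yab m a (m+c)" by auto
      have "(a, m+c) \<in> S" using memS a c by simp
      hence "X \<in> P" using P_eq a by auto
      moreover have "m + c \<in> X" using a unfolding Yab_def by simp
      ultimately show "X \<in> {X\<in>P. m + c \<in> X}" by simp
    qed
  qed
  have sub: "(\<lambda>a. (a, m+c)) ` {a\<in>{1..m}. c \<le> w a} \<subseteq> S" using memS c by auto
  show ?thesis unfolding eq
    by (subst card_image[OF inj_on_subset[OF inj_S sub]], rule card_image) (auto simp: inj_on_def)
qed

lemma star_low:
  assumes i: "1 \<le> i" "i \<le> m"
  shows "card {r\<in>{1..n}. i \<le> R r} = n - w i"
proof -
  have "{r\<in>{1..n}. i \<le> R r} = {1..n - w i}"
  proof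
    show "{1..n - w i} \<subseteq> {r\<in>{1..n}. i \<le> R r}"
    proof
      fix r assume r: "r \<in> {1..n - w i}"
      have "{1..i} \<subseteq> {j\<in>{1..m}. r \<le> n - w j}"
      proof
        fix j assume "j \<in> {1..i}"
        hence "w j \<le> w i" "j \<in> {1..m}" using w_mono i by auto
        thus "j \<in> {j\<in>{1..m}. r \<le> n - w j}" using r by auto
      qed
      hence "i \<le> card {j\<in>{1..m}. r \<le> n - w j}"
        using card_mono[of "{j\<in>{1..m}. r \<le> n - w j}" "{1..i}"] by simp
      thus "r \<in> {r\<in>{1..n}. i \<le> R r}" using r unfolding R_def by auto
    qed
    show "{r\<in>{1..n}. i \<le> R r} \<subseteq> {1..n - w i}"
    proof
      fix r assume r: "r \<in> {r\<in>{1..n}. i \<le> R r}"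
      show "r \<in> {1..n - w i}"
      proof (rule ccontr)
        assume "r \<notin> {1..n - w i}"
        hence gt: "n < r + v (m + 1 - i)" using r v_w[OF i] by auto
        have vr: "v r = 0" by (rule keyz[OF _ _ _ gt]) (use r i in auto)
        have "{j\<in>{1..m}. r \<le> n - w j} \<subseteq> {1..<i}"
        proof
          fix j assume j: "j \<in> {j\<in>{1..m}. r \<le> n - w j}"
          show "j \<in> {1..<i}"
          proof (rule ccontr)
            assume "j \<notin> {1..<i}"
            hence "w i \<le> w j" using j w_mono by auto
            moreover have "1 \<le> r" using r by simp
            ultimately show False using j gt v_w[OF i] by auto
          qed
        qed
        hence "card {j\<in>{1..m}. r \<le> n - w j} \<le> card {1..<i}"
          by (rule card_mono[rotated]) simp
        hence "card {j\<in>{1..m}. r \<le> n - w j} \<le> i - 1" by simp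
        thus False using r vr i unfolding R_def by auto
      qed
    qed
  qed
  thus ?thesis by simp
qed

lemma star_high:
  assumes c: "1 \<le> c"
  shows "card {r\<in>{1..n}. m + c \<le> R r} = card {a\<in>{1..m}. c \<le> w a}"
proof -
  have cm: "\<And>r. card {j\<in>{1..m}. r \<le> n - w j} \<le> m"
  proof -
    fix r
    have "card {j\<in>{1..m}. r \<le> n - w j} \<le> card {1..m}" by (rule card_mono) auto
    thus "card {j\<in>{1..m}. r \<le> n - w j} \<le> m" by simp
  qed
  have "{r\<in>{1..n}. m + c \<le> R r} = {k\<in>{1..m}. c \<le> v k}"
  proof
    show "{r\<in>{1..n}. m + c \<le> R r} \<subseteq> {k\<in>{1..m}. c \<le> v k}"
    proof
      fix r assume r: "r \<in> {r\<in>{1..n}. m + c \<le> R r}"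
      hence "c \<le> v r" using cm[of r] unfolding R_def by auto
      moreover have "r \<le> m"
      proof (rule ccontr)
        assume "\<not> r \<le> m" hence "v r = 0" by (simp add: v_zero)
        thus False using c \<open>c \<le> v r\<close> by simp
      qed
      ultimately show "r \<in> {k\<in>{1..m}. c \<le> v k}" using r by auto
    qed
    show "{k\<in>{1..m}. c \<le> v k} \<subseteq> {r\<in>{1..n}. m + c \<le> R r}"
    proof
      fix k assume k: "k \<in> {k\<in>{1..m}. c \<le> v k}"
      hence vk: "0 < v k" using c by auto
      have kn: "k < n" using v_lt vk k by auto
      have all: "\<forall>j\<in>{1..m}. k \<le> n - w j"
      proof
        fix j assume j: "j \<in> {1..m}"
        show "k \<le> n - w j"
        proof (rule ccontr)
          assume "\<not> k \<le> n - w j"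
          hence "n < k + v (m + 1 - j)" using v_w j by auto
          hence "v k = 0" by (rule keyz[rotated 3]) (use k kn j in auto)
          thus False using vk by simp
        qed
      qed
      have "{j\<in>{1..m}. k \<le> n - w j} = {1..m}" using all by auto
      hence "R k = m + v k" unfolding R_def by simp
      thus "k \<in> {r\<in>{1..n}. m + c \<le> R r}" using k kn by auto
    qed
  qed
  moreover have "{a\<in>{1..m}. c \<le> w a} = (\<lambda>k. m + 1 - k) ` {k\<in>{1..m}. c \<le> v k}"
  proof
    show "{a\<in>{1..m}. c \<le> w a} \<subseteq> (\<lambda>k. m + 1 - k) ` {k\<in>{1..m}. c \<le> v k}"
    proof
      fix a assume a: "a \<in> {a\<in>{1..m}. c \<le> w a}"
      hence "m + 1 - a \<in> {k\<in>{1..m}. c \<le> v k}" using v_w by auto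
      moreover have "a = m + 1 - (m + 1 - a)" using a by auto
      ultimately show "a \<in> (\<lambda>k. m + 1 - k) ` {k\<in>{1..m}. c \<le> v k}" by blast
    qed
    show "(\<lambda>k. m + 1 - k) ` {k\<in>{1..m}. c \<le> v k} \<subseteq> {a\<in>{1..m}. c \<le> w a}"
      unfolding v_def by auto
  qed
  moreover have "inj_on (\<lambda>k. m + 1 - k) {k\<in>{1..m}. c \<le> v k}" by (auto simp: inj_on_def)
  ultimately show ?thesis by (simp add: card_image)
qed

lemma type_ok: "has_type P (star m n nuL)"
  unfolding has_type_def
proof
  fix i assume "i \<in> {1..largest_part (star m n nuL)}"
  hence i: "1 \<le> i" by simp
  show "card {S\<in>P. i \<in> S} = conj_part (star m n nuL) i"
  proof (cases "i \<le> m")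
    case True
    thus ?thesis using count_low star_low conj_star i by simp
  next
    case False
    define c where "c = i - m"
    have c: "i = m + c" "1 \<le> c" using False unfolding c_def by auto
    thus ?thesis using count_high star_high conj_star i by simp
  qed
qed

lemma part_ok: "nat_partition nuL (n - 1)"
  unfolding nat_partition_def
proof (intro conjI)
  show "sorted_wrt (\<ge>) nuL" unfolding nuL_def sorted_wrt_map
    by (rule sorted_wrt_mono_rel[OF _ sorted_wrt_upt]) (auto intro: v_anti)
  show "0 \<notin> set nuL"
  proof
    assume "0 \<in> set nuL"
    then obtain k where k: "k \<in> {1..<L+1}" "v k = 0" unfolding nuL_def by (auto simp del: upt_Suc)
    thus False using L_iff[of k] by simp
  qed
  have "sum_list nuL = (\<Sum>k\<in>{1..<L+1}. v k)" unfolding nuL_def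
    by (simp add: sum_set_upt_conv_sum_list_nat[symmetric])
  also have "\<dots> = (\<Sum>k\<in>{1..m}. v k)"
  proof (rule sum.mono_neutral_left)
    show "\<forall>k\<in>{1..m} - {1..<L+1}. v k = 0"
    proof
      fix k assume "k \<in> {1..m} - {1..<L+1}"
      thus "v k = 0" using L_iff[of k] by auto
    qed
  qed (use L_le in auto)
  finally show "sum_list nuL = n - 1" using sumv by simp
qed

lemma main: "\<exists>nu. nat_partition nu (n - 1) \<and> length nu \<le> m \<and> has_type P (star m n nu)"
  using part_ok type_ok L_le unfolding nuL_def by (intro exI[of _ nuL]) (simp add: nuL_def)

end

theorem lemma5p5:
  fixes m n :: nat and P :: "nat set set"
  assumes "0 < n" and "n \<le> 5"
    and "set_family m n P" and "closed_family m P"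
  shows "\<exists>nu. nat_partition nu (n - 1) \<and> length nu \<le> m \<and> has_type P (star m n nu)"
proof -
  interpret fam m n P using assms by unfold_locales
  show ?thesis by (rule main)
qed

end
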